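(* Let $x_1,\dots,x_N\in\mathbb{R}^q$ and let $d:\mathbb{R}^q\times\mathbb{R}^q\to\mathbb{R}_{\ge0}$ be any function such that for every subset $J\subseteq\{1,\dots,N\}$ the function $x\mapsto\sum_{i\in J}d(x,x_i)$ attains its minimum on $\mathbb{R}^q$ (for $J=\emptyset$ this is the zero function). Let $\mu$ be a choice function assigning to each subset $J\subseteq\{1,\dots,N\}$ a fixed point $\mu(J)\in\operatorname{argmin}_{x}\sum_{i\in J}d(x,x_i)$. Let $\hat x_0\in\mathbb{R}^q$ be arbitrary and define recursively $$C_n=\{i\in\{1,\dots,N\}: d(\hat x_n,x_i)<1\},\qquad \hat x_{n+1}=\mu(C_n).$$ Then the sequence $(\hat x_n)$ is stationary: there exists $n_0$ such that $\hat x_n=\hat x_{n_0}$ for all $n\ge n_0$.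
   Context: This is generalized mean shift with the triangular profile $k(u)=\max(1-u,0)$, whose weight function is $g(u)=1$ if $u<1$ and $g(u)=0$ if $u\ge1$. The associated objective is $f(x)=\sum_{i=1}^N\max(1-d(x,x_i),0)=\sum_{i:\,d(x,x_i)<1}(1-d(x,x_i))$. *)

theory Defs
  imports "HOL-Analysis.Analysis"
begin

end

theory Submission
  imports Defs
begin

theorem theorem1:
  fixes N :: nat
    and x :: "nat \<Rightarrow> real ^ 'q"
    and d :: "real ^ 'q \<Rightarrow> real ^ 'q \<Rightarrow> real"
    and \<mu> :: "nat set \<Rightarrow> real ^ 'q"
    and xh :: "nat \<Rightarrow> real ^ 'q"
  assumes d_nonneg: "\<And>y z. d y z \<ge> 0"
    and attains: "\<And>J. J \<subseteq> {1..N} \<Longrightarrow>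
        \<exists>m. \<forall>y. (\<Sum>i\<in>J. d m (x i)) \<le> (\<Sum>i\<in>J. d y (x i))"
    and mu_argmin: "\<And>J y. J \<subseteq> {1..N} \<Longrightarrow>
        (\<Sum>i\<in>J. d (\<mu> J) (x i)) \<le> (\<Sum>i\<in>J. d y (x i))"
    and step: "\<And>n. xh (Suc n) = \<mu> {i \<in> {1..N}. d (xh n) (x i) < 1}"
  shows "\<exists>n0. \<forall>n\<ge>n0. xh n = xh n0"
proof -
  define Cw where "Cw w = {i \<in> {1..N}. d w (x i) < 1}" for w
  define f where "f w = (\<Sum>i\<in>{1..N}. max (1 - d w (x i)) 0)" for w
  define C where "C n = Cw (xh n)" for n
  define F where "F n = f (xh n)" for n
  define V where "V = f ` \<mu> ` Pow {1..N}"
  define A where "A n = card {v\<in>V. F n < v}" for n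
  define r where "r n = A n * (N+1) + card (C n)" for n
  have finV: "finite V" unfolding V_def by simp
  have CsubN: "C n \<subseteq> {1..N}" for n unfolding C_def Cw_def by auto
  have cardC: "card (C n) \<le> N" for n
    using card_mono[OF _ CsubN[of n]] by simp
  have stepC: "xh (Suc n) = \<mu> (C n)" for n using step unfolding C_def Cw_def by simp
  have FV: "F (Suc n) \<in> V" for n unfolding F_def V_def stepC using CsubN by blast
  have fC: "f w = (\<Sum>i\<in>Cw w. 1 - d w (x i))" for w
  proof -
    have "f w = (\<Sum>i\<in>{1..N}. if i \<in> Cw w then 1 - d w (x i) else 0)"
      unfolding f_def Cw_def by (rule sum.cong) auto
    also have "\<dots> = (\<Sum>i\<in>Cw w. 1 - d w (x i))"
      by (simp add: sum.If_cases Cw_def Int_def)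
    finally show ?thesis .
  qed
  have key: "xh (Suc (Suc n)) = xh (Suc n) \<or> r (Suc n) < r n" for n
  proof -
    let ?C = "C n" and ?y = "xh (Suc n)" and ?z = "xh n"
    have finC: "finite ?C" using CsubN finite_subset by blast
    have m: "(\<Sum>i\<in>?C. d ?y (x i)) \<le> (\<Sum>i\<in>?C. d ?z (x i))"
      unfolding stepC using mu_argmin[OF CsubN] by simp
    have Fz: "F n = (\<Sum>i\<in>?C. 1 - d ?z (x i))" unfolding F_def C_def fC ..
    have fy1: "F (Suc n) \<ge> (\<Sum>i\<in>?C. max (1 - d ?y (x i)) 0)"
      unfolding F_def f_def
      by (rule sum_mono2) (use CsubN in auto)
    have "(\<Sum>i\<in>?C. max (1 - d ?y (x i)) 0) \<ge> (\<Sum>i\<in>?C. 1 - d ?y (x i))"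
      by (rule sum_mono) auto
    also have "(\<Sum>i\<in>?C. 1 - d ?y (x i)) \<ge> F n"
      unfolding Fz using m by (simp add: sum_subtractf)
    finally have mono: "F n \<le> F (Suc n)" using fy1 by linarith
    show ?thesis
    proof (cases "F n < F (Suc n)")
      case True
      have "{v\<in>V. F (Suc n) < v} \<subset> {v\<in>V. F n < v}"
        using True FV[of n] by auto
      hence "A (Suc n) < A n" unfolding A_def
        by (rule psubset_card_mono[rotated]) (use finV in simp)
      hence "(A (Suc n) + 1) * (N+1) \<le> A n * (N+1)"
        by (intro mult_right_mono) auto
      thus ?thesis using cardC[of n] cardC[of "Suc n"] unfolding r_def
        by (auto simp: algebra_simps)
    next
      case False
      hence eq: "F (Suc n) = F n" using mono by simp
      have sub: "C (Suc n) \<subseteq> ?C"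
      proof
        fix i assume i: "i \<in> C (Suc n)"
        show "i \<in> ?C"
        proof (rule ccontr)
          assume ni: "i \<notin> ?C"
          have iN: "i \<in> {1..N}" and di: "d ?y (x i) < 1"
            using i unfolding C_def Cw_def by auto
          have "F (Suc n) \<ge> (\<Sum>i\<in>insert i ?C. max (1 - d ?y (x i)) 0)"
            unfolding F_def f_def
            by (rule sum_mono2) (use CsubN iN in auto)
          also have "(\<Sum>i\<in>insert i ?C. max (1 - d ?y (x i)) 0)
              = max (1 - d ?y (x i)) 0 + (\<Sum>i\<in>?C. max (1 - d ?y (x i)) 0)"
            using finC ni by simp
          finally have "F (Suc n) > (\<Sum>i\<in>?C. max (1 - d ?y (x i)) 0)"
            using di by linarith
          moreover have "(\<Sum>i\<in>?C. max (1 - d ?y (x i)) 0) \<ge> F n"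
            using \<open>(\<Sum>i\<in>?C. 1 - d ?y (x i)) \<ge> F n\<close>
              \<open>(\<Sum>i\<in>?C. max (1 - d ?y (x i)) 0) \<ge> (\<Sum>i\<in>?C. 1 - d ?y (x i))\<close>
            by linarith
          ultimately show False using eq by linarith
        qed
      qed
      show ?thesis
      proof (cases "C (Suc n) = ?C")
        case True
        then show ?thesis using stepC[of n] stepC[of "Suc n"] by simp
      next
        case False
        hence "card (C (Suc n)) < card ?C"
          using sub finC psubset_card_mono by blast
        moreover have "A (Suc n) = A n" unfolding A_def using eq by simp
        ultimately show ?thesis unfolding r_def by simp
      qed
    qed
  qed
  have "\<exists>n. xh (Suc (Suc n)) = xh (Suc n)"
  proof (rule ccontr)
    assume "\<nexists>n. xh (Suc (Suc n)) = xh (Suc n)"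
    hence dec: "r (Suc n) < r n" for n using key by blast
    have "r n + n \<le> r 0" for n
    proof (induction n)
      case (Suc n) thus ?case using dec[of n] by simp
    qed simp
    from this[of "Suc (r 0)"] show False by simp
  qed
  then obtain n where n: "xh (Suc (Suc n)) = xh (Suc n)" by blast
  define m where "m = Suc n"
  have s: "xh (Suc (m + k)) = xh (m + k)" for k
  proof (induction k)
    case 0 then show ?case using n m_def by simp
  next
    case (Suc k)
    have "xh (Suc (Suc (m + k))) = \<mu> (Cw (xh (Suc (m+k))))"
      using stepC unfolding C_def by simp
    also have "\<dots> = \<mu> (Cw (xh (m+k)))" using Suc by simp
    also have "\<dots> = xh (Suc (m+k))" using stepC unfolding C_def by simp
    finally show ?case by simp
  qed
  have c: "xh (m + k) = xh m" for k
    by (induction k) (use s in auto)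
  show ?thesis
  proof (intro exI allI impI)
    fix k assume "m \<le> k"
    then obtain j where "k = m + j" using le_Suc_ex by blast
    thus "xh k = xh m" using c by simp
  qed
qed

end
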